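(* Let $E$ be a universally measurable separable metric space with Borel $\sigma$-algebra $\mathcal{B}$, $P$ a Markovian kernel on $(E,\mathcal{B})$, $R=\sum_{k=0}^\infty2^{-(k+1)}P^k$, and $\mathcal{B}_1^+$ the measurable functions with values in $[0,1]$. Assume there exist a finite positive measure $m$, a continuous $\phi:[0,\infty)\to[0,\infty)$ with $\phi(0)=0$ having an increasing inverse $\phi^{-1}$, and $\delta\in[0,1)$ such that $Pf(x)\le\phi(m(f))+\delta$ for all $f\in\mathcal{B}_1^+$ and all $x\in E$. Then $m\circ R$ is mean almost invariant for $P$, and the number of pairwise mutually singular invariant probability measures of $P$ is at most $m(E)/\phi^{-1}(1-\delta)$. Consequently, if $\phi(m(E)/2)<1-\delta$, then $P$ has a unique invariant probability measure (hence ergodic).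
   Context: $m\circ R$ is the measure $A\mapsto m(R1_A)$. A finite positive measure $\mu$ is mean almost invariant for $P$ if there exist $\delta'\in[0,1)$, $\psi:\mathcal{B}\to\mathbb{R}_+$ with $\lim_{\mu(A)\to0}\psi(A)=0$ and $n_1$ such that $\mu(S_n1_A)\le\psi(A)+\delta'\mu(E)$ for all $A$ and $n\ge n_1$, where $S_n=\frac1n\sum_{k=0}^{n-1}P^k$. *)

theory Defs
  imports "HOL-Probability.Probability"
begin

definition universally_measurable :: "'a::topological_space set \<Rightarrow> bool" where
  "universally_measurable S \<longleftrightarrow>
     (\<forall>\<mu>. finite_measure \<mu> \<and> sets \<mu> = sets borel \<longrightarrow> S \<in> sets (completion \<mu>))"

definition markov_kernel :: "'a measure \<Rightarrow> ('a \<Rightarrow> 'a measure) \<Rightarrow> bool" where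
  "markov_kernel M K \<longleftrightarrow> K \<in> M \<rightarrow>\<^sub>M prob_algebra M"

definition kop :: "('a \<Rightarrow> 'a measure) \<Rightarrow> ('a \<Rightarrow> real) \<Rightarrow> 'a \<Rightarrow> real" where
  "kop K f x = (\<integral>y. f y \<partial>(K x))"

definition kpow :: "('a \<Rightarrow> 'a measure) \<Rightarrow> nat \<Rightarrow> ('a \<Rightarrow> real) \<Rightarrow> 'a \<Rightarrow> real" where
  "kpow K n f = (kop K ^^ n) f"

definition resolvent :: "('a \<Rightarrow> 'a measure) \<Rightarrow> ('a \<Rightarrow> real) \<Rightarrow> 'a \<Rightarrow> real" where
  "resolvent K f x = (\<Sum>k. (1/2) ^ (k+1) * kpow K k f x)"

definition cesaro :: "('a \<Rightarrow> 'a measure) \<Rightarrow> nat \<Rightarrow> ('a \<Rightarrow> real) \<Rightarrow> 'a \<Rightarrow> real" where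
  "cesaro K n f x = (1 / real n) * (\<Sum>k<n. kpow K k f x)"

definition comp_resolvent :: "'a measure \<Rightarrow> 'a measure \<Rightarrow> ('a \<Rightarrow> 'a measure) \<Rightarrow> 'a measure" where
  "comp_resolvent M m K =
     measure_of (space M) (sets M) (\<lambda>A. ennreal (\<integral>x. resolvent K (indicator A) x \<partial>m))"

definition mean_almost_invariant :: "'a measure \<Rightarrow> ('a \<Rightarrow> 'a measure) \<Rightarrow> 'a measure \<Rightarrow> bool" where
  "mean_almost_invariant M K \<mu> \<longleftrightarrow>
     finite_measure \<mu> \<and> sets \<mu> = sets M \<and>
     (\<exists>\<delta>' \<psi> n1. 0 \<le> \<delta>' \<and> \<delta>' < 1 \<and>
        (\<forall>A\<in>sets M. 0 \<le> \<psi> A) \<and>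
        (\<forall>\<epsilon>>0. \<exists>\<eta>>0. \<forall>A\<in>sets M. measure \<mu> A < \<eta> \<longrightarrow> \<psi> A < \<epsilon>) \<and>
        (\<forall>A\<in>sets M. \<forall>n\<ge>n1.
           (\<integral>x. cesaro K n (indicator A) x \<partial>\<mu>) \<le> \<psi> A + \<delta>' * measure \<mu> (space M)))"

definition invariant_prob :: "'a measure \<Rightarrow> ('a \<Rightarrow> 'a measure) \<Rightarrow> 'a measure \<Rightarrow> bool" where
  "invariant_prob M K \<mu> \<longleftrightarrow> prob_space \<mu> \<and> sets \<mu> = sets M \<and>
     (\<forall>A\<in>sets M. (\<integral>x. kop K (indicator A) x \<partial>\<mu>) = measure \<mu> A)"

definition mutually_singular :: "'a measure \<Rightarrow> 'a measure \<Rightarrow> 'a measure \<Rightarrow> bool" where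
  "mutually_singular M \<mu> \<nu> \<longleftrightarrow>
     (\<exists>A\<in>sets M. emeasure \<mu> A = 0 \<and> emeasure \<nu> (space M - A) = 0)"

end

theory Submission
  imports Defs
begin


lemma zero_by_pow:
  fixes c z B :: real
  assumes c: "0 \<le> c" "c < 1" and h: "\<And>n. z \<le> B * c ^ n"
  shows "z \<le> 0"
proof -
  have "(\<lambda>n. B * c ^ n) \<longlonglongrightarrow> B * 0"
    by (intro tendsto_mult tendsto_const LIMSEQ_power_zero) (use c in auto)
  then show ?thesis using h by (intro LIMSEQ_le_const[of "\<lambda>n. B * c ^ n"]) auto
qed

lemma pow_small:
  fixes c e :: real
  assumes c: "0 \<le> c" "c < 1" and e: "e > 0"
  shows "\<exists>n. c ^ n < e"
proof -
  have "(\<lambda>n. c ^ n) \<longlonglongrightarrow> 0" by (intro LIMSEQ_power_zero) (use c in auto)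
  then have "eventually (\<lambda>n. c ^ n < e) sequentially" using e by (rule order_tendstoD)
  then show ?thesis by (auto simp: eventually_sequentially)
qed

lemma osc_lemma:
  fixes h :: "'a \<Rightarrow> real"
  assumes ne: "S \<noteq> {}" and lo: "\<And>x. x \<in> S \<Longrightarrow> lo \<le> h x"
    and d: "\<And>x y. x \<in> S \<Longrightarrow> y \<in> S \<Longrightarrow> h x - h y \<le> d"
  shows "\<exists>a. \<forall>x\<in>S. a \<le> h x \<and> h x \<le> a + d"
proof (intro exI ballI conjI)
  have bdd: "bdd_below (h ` S)" using lo by (meson bdd_belowI2)
  fix x assume x: "x \<in> S"
  show "(INF y\<in>S. h y) \<le> h x" using bdd x by (rule cINF_lower)
  have "h x - d \<le> (INF y\<in>S. h y)"
    using ne by (rule cINF_greatest) (use d x in force)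
  then show "h x \<le> (INF y\<in>S. h y) + d" by simp
qed

locale mk =
  fixes M :: "'a measure" and K :: "'a \<Rightarrow> 'a measure"
  assumes K: "K \<in> M \<rightarrow>\<^sub>M prob_algebra M"
begin

definition bnd :: "('a \<Rightarrow> real) \<Rightarrow> real \<Rightarrow> real \<Rightarrow> bool" where
  "bnd f a b \<longleftrightarrow> f \<in> borel_measurable M \<and> (\<forall>x\<in>space M. a \<le> f x \<and> f x \<le> b)"

lemma Kx: assumes "x \<in> space M"
  shows "prob_space (K x)" "sets (K x) = sets M" "space (K x) = space M"
  using measurable_space[OF K assms] by (auto simp: space_prob_algebra intro!: sets_eq_imp_space_eq)

lemma Kem: "x \<in> space M \<Longrightarrow> emeasure (K x) (space M) = 1"
  using Kx[of x] prob_space.emeasure_space_1 by metis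

lemma meas_Kx: "f \<in> borel_measurable M \<Longrightarrow> x \<in> space M \<Longrightarrow> f \<in> borel_measurable (K x)"
  using Kx(2) measurable_cong_sets by blast

lemma Ksub: "K \<in> M \<rightarrow>\<^sub>M subprob_algebra M"
  using K by (rule measurable_prob_algebraD)

lemma kop_meas: "f \<in> borel_measurable M \<Longrightarrow> kop K f \<in> borel_measurable M"
  unfolding kop_def[abs_def]
  by (rule measurable_compose[OF Ksub integral_measurable_subprob_algebra])

lemma abs_between: "a \<le> (y::real) \<Longrightarrow> y \<le> b \<Longrightarrow> \<bar>y\<bar> \<le> max \<bar>a\<bar> \<bar>b\<bar>" by arith

lemma bnd_integrable: "bnd f a b \<Longrightarrow> x \<in> space M \<Longrightarrow> integrable (K x) f"
proof -
  assume f: "bnd f a b" and x: "x \<in> space M"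
  interpret prob_space "K x" using Kx(1)[OF x] .
  show ?thesis
    by (rule integrable_const_bound[where B="max \<bar>a\<bar> \<bar>b\<bar>"])
       (use f x in \<open>auto simp: bnd_def Kx(3) meas_Kx intro!: AE_I2 abs_between\<close>)
qed

lemma bnd_prob_int:
  fixes f :: "'b \<Rightarrow> real"
  assumes N: "prob_space N" and f: "f \<in> borel_measurable N" and b: "\<And>x. x \<in> space N \<Longrightarrow> a \<le> f x \<and> f x \<le> b"
  shows "a \<le> integral\<^sup>L N f \<and> integral\<^sup>L N f \<le> b"
proof -
  interpret prob_space N by fact
  have int: "integrable N f"
    by (rule integrable_const_bound[where B="max \<bar>a\<bar> \<bar>b\<bar>"]) (use f b in \<open>auto intro!: AE_I2 abs_between\<close>)
  have "integral\<^sup>L N (\<lambda>x. a) \<le> integral\<^sup>L N f" by (rule integral_mono) (use int b in auto)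
  moreover have "integral\<^sup>L N f \<le> integral\<^sup>L N (\<lambda>x. b)" by (rule integral_mono) (use int b in auto)
  ultimately show ?thesis by (simp add: prob_space)
qed

lemma kop_bnd: "bnd f a b \<Longrightarrow> bnd (kop K f) a b"
  unfolding bnd_def
  by (auto simp: kop_meas kop_def intro!: bnd_prob_int[THEN conjunct1] bnd_prob_int[THEN conjunct2]
      Kx meas_Kx simp: Kx(3))

lemma kop_cong: "(\<And>y. y \<in> space M \<Longrightarrow> f y = g y) \<Longrightarrow> x \<in> space M \<Longrightarrow> kop K f x = kop K g x"
  unfolding kop_def by (rule Bochner_Integration.integral_cong) (auto simp: Kx(3))

lemma kop_const: "x \<in> space M \<Longrightarrow> kop K (\<lambda>y. b) x = b"
  using Kx(1) by (simp add: kop_def prob_space.prob_space)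

lemma kop_sum:
  assumes J: "finite J" and f: "\<And>j. j \<in> J \<Longrightarrow> bnd (f j) (lo j) (hi j)" and x: "x \<in> space M"
  shows "kop K (\<lambda>y. \<Sum>j\<in>J. a j * f j y) x = (\<Sum>j\<in>J. a j * kop K (f j) x)"
proof -
  have "integrable (K x) (f j)" if "j \<in> J" for j using bnd_integrable[OF f[OF that] x] .
  then show ?thesis unfolding kop_def by (simp add: Bochner_Integration.integral_sum)
qed

lemma kop_aff:
  assumes f: "bnd f lo hi" and x: "x \<in> space M"
  shows "kop K (\<lambda>y. a * f y + b) x = a * kop K f x + b"
proof -
  interpret prob_space "K x" using Kx(1)[OF x] .
  show ?thesis unfolding kop_def
    by (subst Bochner_Integration.integral_add) (use bnd_integrable[OF f x] in \<open>auto simp: prob_space\<close>)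
qed

lemma kpow_0[simp]: "kpow K 0 f = f" by (simp add: kpow_def)
lemma kpow_Suc: "kpow K (Suc n) f = kop K (kpow K n f)" by (simp add: kpow_def)
lemma kpow_Suc': "kpow K (Suc n) f = kpow K n (kop K f)" by (simp add: kpow_def funpow_Suc_right del: funpow.simps)
lemma kpow_add: "kpow K (m + n) f = kpow K m (kpow K n f)" by (simp add: kpow_def funpow_add)

lemma kpow_bnd: "bnd f a b \<Longrightarrow> bnd (kpow K n f) a b"
  by (induction n) (auto simp: kpow_Suc kop_bnd)

lemma kpow_cong: "(\<And>y. y \<in> space M \<Longrightarrow> f y = g y) \<Longrightarrow> x \<in> space M \<Longrightarrow> kpow K n f x = kpow K n g x"
proof (induction n arbitrary: x)
  case (Suc n) show ?case unfolding kpow_Suc by (rule kop_cong) (use Suc in auto)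
qed simp

lemma kpow_const: "x \<in> space M \<Longrightarrow> kpow K n (\<lambda>y. b) x = b"
proof (induction n arbitrary: x)
  case (Suc n)
  then have "kpow K (Suc n) (\<lambda>y. b) x = kop K (\<lambda>y. b) x" unfolding kpow_Suc by (rule kop_cong) (use Suc in auto)
  then show ?case using Suc by (simp add: kop_const)
qed simp

lemma kpow_sum:
  assumes J: "finite J" and f: "\<And>j. j \<in> J \<Longrightarrow> bnd (f j) (lo j) (hi j)" and x: "x \<in> space M"
  shows "kpow K n (\<lambda>y. \<Sum>j\<in>J. a j * f j y) x = (\<Sum>j\<in>J. a j * kpow K n (f j) x)"
  using x
proof (induction n arbitrary: x)
  case (Suc n)
  have "kpow K (Suc n) (\<lambda>y. \<Sum>j\<in>J. a j * f j y) x = kop K (\<lambda>y. \<Sum>j\<in>J. a j * kpow K n (f j) y) x"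
    unfolding kpow_Suc by (rule kop_cong) (use Suc in auto)
  also have "\<dots> = (\<Sum>j\<in>J. a j * kpow K (Suc n) (f j) x)"
    unfolding kpow_Suc by (rule kop_sum[OF J _ Suc(2)]) (use f kpow_bnd in blast)
  finally show ?case .
qed simp

lemma kpow_lim:
  assumes g: "\<And>N. bnd (g N) (-B) B" "bnd h (-B) B"
    and lim: "\<And>x. x \<in> space M \<Longrightarrow> (\<lambda>N. g N x) \<longlonglongrightarrow> h x"
    and x: "x \<in> space M"
  shows "(\<lambda>N. kpow K k (g N) x) \<longlonglongrightarrow> kpow K k h x"
  using x
proof (induction k arbitrary: x)
  case 0 then show ?case using lim by simp
next
  case (Suc k)
  have b1: "bnd (kpow K k (g N)) (-B) B" for N using g kpow_bnd by blast
  have b2: "bnd (kpow K k h) (-B) B" using g kpow_bnd by blast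
  show ?case unfolding kpow_Suc kop_def
  proof (rule integral_dominated_convergence[where w="\<lambda>_. B"])
    show "kpow K k h \<in> borel_measurable (K x)" using b2 Suc(2) by (auto simp: bnd_def meas_Kx)
    show "kpow K k (g N) \<in> borel_measurable (K x)" for N using b1 Suc(2) by (auto simp: bnd_def meas_Kx)
    show "integrable (K x) (\<lambda>_. B)"
      using Kx(1)[OF Suc(2)] by (simp add: prob_space.finite_measure finite_measure.integrable_const)
    show "AE y in K x. (\<lambda>N. kpow K k (g N) y) \<longlonglongrightarrow> kpow K k h y"
      by (rule AE_I2) (use Suc Kx(3)[OF Suc(2)] in auto)
    show "AE y in K x. norm (kpow K k (g N) y) \<le> B" for N
      by (rule AE_I2) (use b1[of N] Kx(3)[OF Suc(2)] in \<open>auto simp: bnd_def abs_le_iff\<close>)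
  qed
qed

end


lemma ca_lemma:
  fixes \<rho> :: "'a set \<Rightarrow> real" and M :: "'a measure"
  assumes nn: "\<And>A. A \<in> sets M \<Longrightarrow> 0 \<le> \<rho> A"
    and add: "\<And>A B. A \<in> sets M \<Longrightarrow> B \<in> sets M \<Longrightarrow> A \<inter> B = {} \<Longrightarrow> \<rho> (A \<union> B) = \<rho> A + \<rho> B"
    and cont: "\<And>T. (\<And>N. T N \<in> sets M) \<Longrightarrow> decseq T \<Longrightarrow> (\<Inter>N. T N) = {} \<Longrightarrow> (\<lambda>N. \<rho> (T N)) \<longlonglongrightarrow> 0"
  shows "countably_additive (sets M) (\<lambda>A. ennreal (\<rho> A))"
unfolding countably_additive_def proof (intro allI impI)
  fix A :: "nat \<Rightarrow> 'a set" assume A: "range A \<subseteq> sets M" "disjoint_family A" "\<Union> (range A) \<in> sets M"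
  define U where "U = \<Union> (range A)"
  define T where "T N = U - (\<Union>i<N. A i)" for N
  have AN: "(\<Union>i<N. A i) \<in> sets M" for N using A(1) by (intro sets.finite_UN) auto
  have e: "\<rho> {} = 0" using add[of "{}" "{}"] by simp
  have fin: "\<rho> (\<Union>i<N. A i) = (\<Sum>i<N. \<rho> (A i))" for N
  proof (induction N)
    case 0 then show ?case using e by simp
  next
    case (Suc N)
    have d: "(\<Union>i<N. A i) \<inter> A N = {}"
    proof -
      { fix i assume "i < N" then have "A i \<inter> A N = {}" using A(2) by (simp add: disjoint_family_on_def) }
      then show ?thesis by blast
    qed
    have "(\<Union>i<Suc N. A i) = (\<Union>i<N. A i) \<union> A N" by (auto simp: lessThan_Suc)
    then have "\<rho> (\<Union>i<Suc N. A i) = \<rho> (\<Union>i<N. A i) + \<rho> (A N)"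
      using add[OF AN _ d] A(1) by auto
    then show ?case using Suc by simp
  qed
  have TS: "T N \<in> sets M" for N using AN A(3) by (auto simp: T_def U_def)
  have split: "\<rho> U = \<rho> (\<Union>i<N. A i) + \<rho> (T N)" for N
  proof -
    have "U = (\<Union>i<N. A i) \<union> T N" by (auto simp: T_def U_def)
    moreover have "(\<Union>i<N. A i) \<inter> T N = {}" by (auto simp: T_def)
    ultimately show ?thesis using add[OF AN TS] by simp
  qed
  have "decseq T" unfolding decseq_def T_def by auto
  moreover have "(\<Inter>N. T N) = {}"
  proof -
    { fix x assume "x \<in> (\<Inter>N. T N)"
      then have "x \<in> U" "\<And>N. x \<notin> (\<Union>i<N. A i)" by (auto simp: T_def)
      then have False by (auto simp: U_def) }
    then show ?thesis by auto
  qed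
  ultimately have "(\<lambda>N. \<rho> (T N)) \<longlonglongrightarrow> 0" using cont TS by blast
  then have "(\<lambda>N. \<rho> U - \<rho> (T N)) \<longlonglongrightarrow> \<rho> U - 0" by (intro tendsto_diff tendsto_const)
  moreover have "(\<lambda>N. \<Sum>i<N. \<rho> (A i)) = (\<lambda>N. \<rho> U - \<rho> (T N))"
  proof (rule ext)
    fix N show "(\<Sum>i<N. \<rho> (A i)) = \<rho> U - \<rho> (T N)" using split[of N] fin[of N] by linarith
  qed
  ultimately have "(\<lambda>N. \<Sum>i<N. \<rho> (A i)) \<longlonglongrightarrow> \<rho> U" by simp
  then have s: "(\<lambda>i. \<rho> (A i)) sums \<rho> U" by (simp add: sums_def)
  have "(\<Sum>i. ennreal (\<rho> (A i))) = ennreal (\<Sum>i. \<rho> (A i))"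
    using A(1) nn s by (intro suminf_ennreal2) (auto simp: sums_summable)
  then show "(\<Sum>i. ennreal (\<rho> (A i))) = ennreal (\<rho> (\<Union> (range A)))"
    using sums_unique[OF s] by (simp add: U_def)
qed

lemma layer:
  fixes t :: real and k :: nat
  assumes k: "k \<ge> 1" and t: "0 \<le> t" "t \<le> 1"
  shows "t - 1 / k \<le> (\<Sum>j\<in>{1..k}. (1 / k) * (if real j / k \<le> t then 1 else 0))
     \<and> (\<Sum>j\<in>{1..k}. (1 / k) * (if real j / k \<le> t then 1 else 0)) \<le> t"
proof -
  have kp: "real k > 0" using k by simp
  define m where "m = nat \<lfloor>real k * t\<rfloor>"
  have fl: "real_of_int \<lfloor>real k * t\<rfloor> \<le> real k * t" "real k * t < real_of_int \<lfloor>real k * t\<rfloor> + 1"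
    by linarith+
  have kt: "real k * t \<le> real k" using t kp by (simp add: mult_left_le)
  have m: "real m = real_of_int \<lfloor>real k * t\<rfloor>" using t kp unfolding m_def by simp
  have e: "{j\<in>{1..k}. real j / real k \<le> t} = {1..m}"
  proof (intro set_eqI iffI)
    fix j assume "j \<in> {j\<in>{1..k}. real j / real k \<le> t}"
    then have "real j \<le> real k * t" "1 \<le> j" using kp by (auto simp: divide_le_eq mult.commute)
    then have "int j \<le> \<lfloor>real k * t\<rfloor>" by (simp add: le_floor_iff)
    then show "j \<in> {1..m}" using \<open>1 \<le> j\<close> unfolding m_def by auto
  next
    fix j assume j: "j \<in> {1..m}"
    then have "real j \<le> real m" by simp
    then have "real j \<le> real k * t" using m fl by linarith
    moreover then have "j \<le> k" using kt by linarith
    ultimately show "j \<in> {j\<in>{1..k}. real j / real k \<le> t}" using j kp by (auto simp: divide_le_eq mult.commute)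
  qed
  have "(\<Sum>j\<in>{1..k}. (1 / k) * (if real j / k \<le> t then 1 else 0)) = (1/k) * (\<Sum>j\<in>{1..k}. (if real j / k \<le> t then 1 else 0))"
    by (simp add: sum_distrib_left)
  also have "(\<Sum>j\<in>{1..k}. (if real j / k \<le> t then 1 else 0::real)) = real (card {j\<in>{1..k}. real j / real k \<le> t})"
    by (subst sum.inter_filter[symmetric]) auto
  also have "\<dots> = real m" using e by simp
  finally have s: "(\<Sum>j\<in>{1..k}. (1 / k) * (if real j / k \<le> t then 1 else 0)) = real m / k" by simp
  have "real k * t - 1 \<le> real m" using fl m by linarith
  then have "(real k * t - 1) / k \<le> real m / k" by (rule divide_right_mono) (use kp in simp)
  moreover have "(real k * t - 1) / k = t - 1 / k" using kp by (simp add: field_simps)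
  ultimately have 1: "t - 1/k \<le> real m / k" by simp
  have "real m \<le> real k * t" using fl m by linarith
  then have "real m / k \<le> (real k * t) / k" by (rule divide_right_mono) (use kp in simp)
  then have 2: "real m / k \<le> t" using kp by simp
  show ?thesis using 1 2 s by simp
qed

lemma zero_by_inv:
  fixes z :: real
  assumes "\<And>k::nat. k \<ge> 1 \<Longrightarrow> \<bar>z\<bar> \<le> 2 / k"
  shows "z = 0"
proof (rule ccontr)
  assume "z \<noteq> 0"
  then have zp: "\<bar>z\<bar> > 0" by simp
  obtain n :: nat where n: "2 / \<bar>z\<bar> < real n" using reals_Archimedean2 by blast
  then have n1: "n \<ge> 1" using zp by (cases n) (auto simp: divide_less_0_iff)
  then have "\<bar>z\<bar> \<le> 2 / n" using assms[of n] by simp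
  moreover have "2 / n < \<bar>z\<bar>" using n zp n1 by (simp add: field_simps)
  ultimately show False by simp
qed

context mk begin

lemma inv_int:
  assumes mu: "invariant_prob M K \<mu>" and f: "bnd f a b"
  shows "(\<integral>x. kop K f x \<partial>\<mu>) = (\<integral>x. f x \<partial>\<mu>)"
proof -
  have P: "prob_space \<mu>" and S: "sets \<mu> = sets M"
    and I: "\<And>A. A \<in> sets M \<Longrightarrow> (\<integral>x. kop K (indicator A) x \<partial>\<mu>) = measure \<mu> A"
    using mu by (auto simp: invariant_prob_def)
  interpret prob_space \<mu> by fact
  have sp: "space \<mu> = space M" using S by (rule sets_eq_imp_space_eq)
  have Kmu: "K \<in> \<mu> \<rightarrow>\<^sub>M subprob_algebra M" using Ksub measurable_cong_sets[OF S refl] by blast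
  have B: "\<mu> \<bind> K = \<mu>"
  proof (rule measure_eqI)
    show "sets (\<mu> \<bind> K) = sets \<mu>" by (subst sets_bind[where N=M]) (use S not_empty sp Kx in auto)
    fix A assume "A \<in> sets (\<mu> \<bind> K)"
    then have A: "A \<in> sets M" using S \<open>sets (\<mu> \<bind> K) = sets \<mu>\<close> by simp
    have bA: "bnd (indicator A) 0 1" using A by (auto simp: bnd_def)
    have "emeasure (\<mu> \<bind> K) A = (\<integral>\<^sup>+x. emeasure (K x) A \<partial>\<mu>)" by (rule emeasure_bind[OF not_empty Kmu A])
    also have "\<dots> = (\<integral>\<^sup>+x. ennreal (kop K (indicator A) x) \<partial>\<mu>)"
    proof (rule nn_integral_cong)
      fix x assume x: "x \<in> space \<mu>"
      then have x': "x \<in> space M" using sp by simp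
      interpret Kp: prob_space "K x" using Kx(1)[OF x'] .
      have "A \<inter> space (K x) = A" using A sets.sets_into_space Kx(3)[OF x'] by blast
      then show "emeasure (K x) A = ennreal (kop K (indicator A) x)"
        by (simp add: kop_def Kp.emeasure_eq_measure)
    qed
    also have "\<dots> = ennreal (\<integral>x. kop K (indicator A) x \<partial>\<mu>)"
    proof (rule nn_integral_eq_integral)
      have kb: "bnd (kop K (indicator A)) 0 1" using bA by (rule kop_bnd)
      show "integrable \<mu> (kop K (indicator A))"
        by (rule integrable_const_bound[where B=1]) (use kb in \<open>auto simp: bnd_def sp measurable_cong_sets[OF S refl] intro!: AE_I2\<close>)
      show "AE x in \<mu>. 0 \<le> kop K (indicator A) x" using kb by (auto simp: bnd_def sp intro!: AE_I2)
    qed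
    also have "\<dots> = emeasure \<mu> A" using I[OF A] by (simp add: emeasure_eq_measure)
    finally show "emeasure (\<mu> \<bind> K) A = emeasure \<mu> A" .
  qed
  have fm: "f \<in> borel_measurable M" using f by (simp add: bnd_def)
  have "(\<integral>x. f x \<partial>\<mu>) = (\<integral>x. f x \<partial>(\<mu> \<bind> K))" using B by simp
  also have "\<dots> = (\<integral>x. (\<integral>y. f y \<partial>K x) \<partial>\<mu>)"
    by (rule integral_bind[OF fm _ Kmu, where B="max \<bar>a\<bar> \<bar>b\<bar>" and B'=1])
       (use f in \<open>auto simp: bnd_def abs_between finite_measure_axioms intro!: AE_I2
           simp: sp Kem Kx(3)\<close>)
  finally show ?thesis by (simp add: kop_def)
qed

lemma inv_kpow:
  assumes mu: "invariant_prob M K \<mu>" and f: "bnd f a b"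
  shows "(\<integral>x. kpow K n f x \<partial>\<mu>) = (\<integral>x. f x \<partial>\<mu>)"
proof (induction n)
  case (Suc n)
  have "(\<integral>x. kpow K (Suc n) f x \<partial>\<mu>) = (\<integral>x. kpow K n f x \<partial>\<mu>)"
    unfolding kpow_Suc by (rule inv_int[OF mu kpow_bnd[OF f]])
  then show ?case using Suc by simp
qed simp

end

locale mkc = mk +
  fixes c :: real
  assumes c: "0 \<le> c" "c < 1" and ne: "space M \<noteq> {}"
    and contr: "\<And>g x y. bnd g 0 1 \<Longrightarrow> x \<in> space M \<Longrightarrow> y \<in> space M \<Longrightarrow> kop K g x - kop K g y \<le> c"
begin

lemma contr2:
  assumes g: "bnd g a (a + d)" "0 \<le> d" and x: "x \<in> space M" and y: "y \<in> space M"
  shows "kop K g x - kop K g y \<le> c * d"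
proof (cases "d = 0")
  case True
  then have "\<And>z. z \<in> space M \<Longrightarrow> g z = a" using g by (auto simp: bnd_def)
  then have "kop K g x = a" "kop K g y = a" using x y kop_cong[of g "\<lambda>_. a"] kop_const by auto
  then show ?thesis using True by simp
next
  case False
  then have dp: "d > 0" using g by simp
  define h where "h y = (1/d) * g y + (- a / d)" for y
  have hb: "bnd h 0 1" using g dp unfolding bnd_def h_def by (auto simp: field_simps)
  have "kop K h x - kop K h y \<le> c" using contr[OF hb x y] .
  moreover have "kop K h x = (1/d) * kop K g x + (- a / d)"
    unfolding h_def by (rule kop_aff[OF g(1) x])
  moreover have "kop K h y = (1/d) * kop K g y + (- a / d)"
    unfolding h_def by (rule kop_aff[OF g(1) y])
  ultimately have "(1/d) * (kop K g x - kop K g y) \<le> c" by (simp add: algebra_simps)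
  then show ?thesis using dp by (simp add: field_simps)
qed

lemma kpow_osc: "bnd f 0 1 \<Longrightarrow> \<exists>a. bnd (kpow K n f) a (a + c ^ n)"
proof (induction n)
  case 0 then show ?case by (intro exI[of _ 0]) simp
next
  case (Suc n)
  then obtain a where a: "bnd (kpow K n f) a (a + c ^ n)" by blast
  have h: "bnd (kpow K (Suc n) f) a (a + c ^ n)" unfolding kpow_Suc using a by (rule kop_bnd)
  have "\<exists>a'. \<forall>x\<in>space M. a' \<le> kpow K (Suc n) f x \<and> kpow K (Suc n) f x \<le> a' + c * c ^ n"
  proof (rule osc_lemma[OF ne])
    show "\<And>x. x \<in> space M \<Longrightarrow> a \<le> kpow K (Suc n) f x" using h by (auto simp: bnd_def)
    show "\<And>x y. x \<in> space M \<Longrightarrow> y \<in> space M \<Longrightarrow> kpow K (Suc n) f x - kpow K (Suc n) f y \<le> c * c ^ n"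
      unfolding kpow_Suc by (rule contr2[OF a]) (use c in auto)
  qed
  then show ?case using h by (auto simp: bnd_def)
qed

definition x0 :: 'a where "x0 = (SOME x. x \<in> space M)"
lemma x0: "x0 \<in> space M" unfolding x0_def using ne by (simp add: some_in_eq)

definition L :: "('a \<Rightarrow> real) \<Rightarrow> real" where "L f = lim (\<lambda>n. kpow K n f x0)"

lemma tail_bnd:
  assumes f: "bnd f 0 1"
  shows "\<exists>a. \<forall>k\<ge>n. \<forall>x\<in>space M. a \<le> kpow K k f x \<and> kpow K k f x \<le> a + c ^ n"
proof -
  obtain a where a: "bnd (kpow K n f) a (a + c ^ n)" using kpow_osc[OF f] by blast
  { fix k x assume k: "k \<ge> n" and x: "x \<in> space M"
    have "kpow K k f = kpow K (k - n) (kpow K n f)" using k kpow_add[of "k - n" n f] by simp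
    then have "a \<le> kpow K k f x \<and> kpow K k f x \<le> a + c ^ n"
      using kpow_bnd[OF a, of "k - n"] x by (simp add: bnd_def) }
  then show ?thesis by blast
qed

lemma L_conv: assumes f: "bnd f 0 1" shows "(\<lambda>n. kpow K n f x0) \<longlonglongrightarrow> L f"
proof -
  have "Cauchy (\<lambda>n. kpow K n f x0)"
  proof (rule CauchyI)
    fix e :: real assume e: "0 < e"
    obtain N where N: "c ^ N < e" using pow_small[OF c e] by blast
    obtain a where a: "\<forall>k\<ge>N. \<forall>x\<in>space M. a \<le> kpow K k f x \<and> kpow K k f x \<le> a + c ^ N"
      using tail_bnd[OF f] by blast
    show "\<exists>M'. \<forall>m\<ge>M'. \<forall>n\<ge>M'. norm (kpow K m f x0 - kpow K n f x0) < e"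
    proof (intro exI allI impI)
      fix m n assume "N \<le> m" "N \<le> n"
      then have "a \<le> kpow K m f x0" "kpow K m f x0 \<le> a + c ^ N" "a \<le> kpow K n f x0" "kpow K n f x0 \<le> a + c ^ N"
        using a x0 by auto
      then show "norm (kpow K m f x0 - kpow K n f x0) < e" using N by auto
    qed
  qed
  then show ?thesis unfolding L_def by (metis Cauchy_convergent_iff convergent_LIMSEQ_iff)
qed

lemma L_approx: assumes f: "bnd f 0 1" and x: "x \<in> space M" shows "\<bar>kpow K n f x - L f\<bar> \<le> c ^ n"
proof -
  obtain a where a: "\<forall>k\<ge>n. \<forall>x\<in>space M. a \<le> kpow K k f x \<and> kpow K k f x \<le> a + c ^ n"
    using tail_bnd[OF f] by blast
  have "a \<le> L f" by (rule LIMSEQ_le_const[OF L_conv[OF f]]) (use a x0 in auto)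
  moreover have "L f \<le> a + c ^ n" by (rule LIMSEQ_le_const2[OF L_conv[OF f]]) (use a x0 in auto)
  ultimately show ?thesis using a x by force
qed

lemma L_bnd: assumes f: "bnd f 0 1" and g: "bnd f a b" shows "a \<le> L f \<and> L f \<le> b"
proof -
  have "a - L f \<le> 1 * c ^ n" "L f - b \<le> 1 * c ^ n" for n
    using L_approx[OF f x0, of n] kpow_bnd[OF g, of n] x0 by (auto simp: bnd_def)
  then have "a - L f \<le> 0" "L f - b \<le> 0" using zero_by_pow[OF c] by blast+
  then show ?thesis by simp
qed

lemma L_lin:
  assumes J: "finite J" and f: "\<And>j. j \<in> J \<Longrightarrow> bnd (f j) 0 1"
    and F: "bnd (\<lambda>y. \<Sum>j\<in>J. a j * f j y) 0 1"
  shows "L (\<lambda>y. \<Sum>j\<in>J. a j * f j y) = (\<Sum>j\<in>J. a j * L (f j))"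
proof -
  let ?F = "\<lambda>y. \<Sum>j\<in>J. a j * f j y"
  have "\<bar>L ?F - (\<Sum>j\<in>J. a j * L (f j))\<bar> \<le> (1 + (\<Sum>j\<in>J. \<bar>a j\<bar>)) * c ^ n" for n
  proof -
    have e: "kpow K n ?F x0 = (\<Sum>j\<in>J. a j * kpow K n (f j) x0)" by (rule kpow_sum[OF J f x0])
    have "\<bar>(\<Sum>j\<in>J. a j * kpow K n (f j) x0) - (\<Sum>j\<in>J. a j * L (f j))\<bar>
        = \<bar>\<Sum>j\<in>J. a j * (kpow K n (f j) x0 - L (f j))\<bar>" by (simp add: sum_subtractf algebra_simps)
    also have "\<dots> \<le> (\<Sum>j\<in>J. \<bar>a j * (kpow K n (f j) x0 - L (f j))\<bar>)" by (rule sum_abs)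
    also have "\<dots> \<le> (\<Sum>j\<in>J. \<bar>a j\<bar> * c ^ n)"
      by (rule sum_mono) (use L_approx[OF f x0] in \<open>auto simp: abs_mult intro!: mult_left_mono\<close>)
    finally have 1: "\<bar>(\<Sum>j\<in>J. a j * kpow K n (f j) x0) - (\<Sum>j\<in>J. a j * L (f j))\<bar> \<le> (\<Sum>j\<in>J. \<bar>a j\<bar>) * c ^ n"
      by (simp add: sum_distrib_right)
    have 2: "\<bar>kpow K n ?F x0 - L ?F\<bar> \<le> c ^ n" by (rule L_approx[OF F x0])
    show ?thesis using 1 2 e by (simp add: algebra_simps)
  qed
  then have "\<bar>L ?F - (\<Sum>j\<in>J. a j * L (f j))\<bar> \<le> 0" using zero_by_pow[OF c] by blast
  then show ?thesis by simp
qed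

lemma L_add:
  assumes "bnd f 0 1" "bnd g 0 1" "bnd (\<lambda>y. f y + g y) 0 1"
  shows "L (\<lambda>y. f y + g y) = L f + L g"
  using L_lin[of "{0::nat,1}" "\<lambda>j. if j = 0 then f else g" "\<lambda>_. 1"] assms by simp

lemma L_cong: "(\<And>y. y \<in> space M \<Longrightarrow> f y = g y) \<Longrightarrow> L f = L g"
proof -
  assume h: "\<And>y. y \<in> space M \<Longrightarrow> f y = g y"
  have "\<And>n. kpow K n f x0 = kpow K n g x0" using kpow_cong[OF h x0] .
  then show ?thesis unfolding L_def by simp
qed

lemma L_kop: assumes f: "bnd f 0 1" shows "L (kop K f) = L f"
proof -
  have fk: "bnd (kop K f) 0 1" using f by (rule kop_bnd)
  have "\<bar>L (kop K f) - L f\<bar> \<le> 2 * c ^ n" for n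
  proof -
    have "\<bar>kpow K n (kop K f) x0 - L (kop K f)\<bar> \<le> c ^ n" by (rule L_approx[OF fk x0])
    moreover have "\<bar>kpow K (Suc n) f x0 - L f\<bar> \<le> c ^ Suc n" by (rule L_approx[OF f x0])
    moreover have "c ^ Suc n \<le> c ^ n" unfolding power_Suc by (rule mult_left_le_one_le) (use c in auto)
    ultimately show ?thesis unfolding kpow_Suc' by linarith
  qed
  then have "\<bar>L (kop K f) - L f\<bar> \<le> 0" using zero_by_pow[OF c] by blast
  then show ?thesis by simp
qed

end


context mk begin
lemma ind_bnd: "A \<in> sets M \<Longrightarrow> bnd (indicator A) 0 1"
  by (auto simp: bnd_def)
end

context mkc begin

definition rho :: "'a set \<Rightarrow> real" where "rho A = L (indicator A)"

lemma rho_nn: "A \<in> sets M \<Longrightarrow> 0 \<le> rho A \<and> rho A \<le> 1"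
  unfolding rho_def using L_bnd ind_bnd by blast

lemma rho_add:
  assumes A: "A \<in> sets M" and B: "B \<in> sets M" and d: "A \<inter> B = {}"
  shows "rho (A \<union> B) = rho A + rho B"
proof -
  have e: "indicator (A \<union> B) = (\<lambda>y. indicator A y + indicator B y :: real)"
    using d by (auto simp: indicator_def fun_eq_iff)
  have "bnd (\<lambda>y. indicator A y + indicator B y :: real) 0 1"
    using ind_bnd[of "A \<union> B"] A B e by simp
  then show ?thesis unfolding rho_def e using L_add ind_bnd A B by blast
qed

lemma rho_cont:
  assumes T: "\<And>N. T N \<in> sets M" and dec: "decseq T" and emp: "(\<Inter>N. T N) = {}"
  shows "(\<lambda>N. rho (T N)) \<longlonglongrightarrow> 0"
proof (rule LIMSEQ_I)
  fix r :: real assume r: "0 < r"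
  obtain n where n: "c ^ n < r / 2" using pow_small[OF c, of "r/2"] r by auto
  have lim: "(\<lambda>N. kpow K n (indicator (T N)) x0) \<longlonglongrightarrow> kpow K n (\<lambda>_. 0) x0"
  proof (rule kpow_lim[where B=1])
    show "bnd (indicator (T N)) (- 1) 1" for N using T by (auto simp: bnd_def split: split_indicator)
    show "bnd (\<lambda>_. 0) (- 1) 1" by (auto simp: bnd_def)
    show "x0 \<in> space M" by (rule x0)
    fix x assume "x \<in> space M"
    obtain N0 where N0: "x \<notin> T N0" using emp by auto
    have "eventually (\<lambda>N. indicator (T N) x = (0::real)) sequentially"
      unfolding eventually_sequentially
    proof (intro exI allI impI)
      fix N assume "N0 \<le> N"
      then have "T N \<subseteq> T N0" using dec by (simp add: decseq_def)
      then have "x \<notin> T N" using N0 by blast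
      then show "indicator (T N) x = (0::real)" by simp
    qed
    then show "(\<lambda>N. indicator (T N) x :: real) \<longlonglongrightarrow> 0" by (rule tendsto_eventually)
  qed
  then have lim0: "(\<lambda>N. kpow K n (indicator (T N)) x0) \<longlonglongrightarrow> 0" using kpow_const[OF x0] by simp
  obtain no where no: "\<forall>N\<ge>no. norm (kpow K n (indicator (T N)) x0 - 0) < r / 2"
    using LIMSEQ_D[OF lim0, of "r/2"] r by auto
  show "\<exists>no. \<forall>N\<ge>no. norm (rho (T N) - 0) < r"
  proof (intro exI allI impI)
    fix N assume N: "no \<le> N"
    have "\<bar>kpow K n (indicator (T N)) x0 - rho (T N)\<bar> \<le> c ^ n"
      unfolding rho_def by (rule L_approx[OF ind_bnd[OF T] x0])
    then show "norm (rho (T N) - 0) < r" using no N n rho_nn[OF T[of N]] by auto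
  qed
qed

definition lam :: "'a measure" where "lam = measure_of (space M) (sets M) (\<lambda>A. ennreal (rho A))"

lemma lam_sets[simp]: "sets lam = sets M" and lam_space[simp]: "space lam = space M"
  by (simp_all add: lam_def)

lemma lam_em: assumes A: "A \<in> sets M" shows "emeasure lam A = ennreal (rho A)"
  unfolding lam_def
proof (rule emeasure_measure_of_sigma[OF sets.sigma_algebra_axioms _ _ A])
  have "rho {} = 0" using rho_add[of "{}" "{}"] by simp
  then show "positive (sets M) (\<lambda>A. ennreal (rho A))" by (simp add: positive_def)
  show "countably_additive (sets M) (\<lambda>A. ennreal (rho A))"
  proof (rule ca_lemma)
    show "\<And>A. A \<in> sets M \<Longrightarrow> 0 \<le> rho A" using rho_nn by blast
    show "\<And>A B. A \<in> sets M \<Longrightarrow> B \<in> sets M \<Longrightarrow> A \<inter> B = {} \<Longrightarrow> rho (A \<union> B) = rho A + rho B"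
      by (rule rho_add)
    show "\<And>T. (\<And>N. T N \<in> sets M) \<Longrightarrow> decseq T \<Longrightarrow> (\<Inter>N. T N) = {} \<Longrightarrow> (\<lambda>N. rho (T N)) \<longlonglongrightarrow> 0"
      by (rule rho_cont)
  qed
qed

lemma lam_meas: "A \<in> sets M \<Longrightarrow> measure lam A = rho A"
  using lam_em rho_nn by (simp add: measure_def)

lemma lam_prob: "prob_space lam"
proof (rule prob_spaceI)
  have "rho (space M) = L (\<lambda>_. 1)" unfolding rho_def by (rule L_cong) simp
  also have "\<dots> = 1" using L_bnd[of "\<lambda>_. 1" 1 1] by (auto simp: bnd_def)
  finally show "emeasure lam (space lam) = 1" using lam_em[OF sets.top] by simp
qed

lemma int_L:
  assumes g: "bnd g 0 1"
  shows "(\<integral>y. g y \<partial>lam) = L g"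
proof -
  interpret P: prob_space lam by (rule lam_prob)
  have gm[measurable]: "g \<in> borel_measurable M" using g by (simp add: bnd_def)
  have "\<bar>(\<integral>y. g y \<partial>lam) - L g\<bar> \<le> 2 / k" if k: "k \<ge> 1" for k :: nat
  proof -
    define B where "B j = {y\<in>space M. real j / real k \<le> g y}" for j
    have BS: "B j \<in> sets M" for j unfolding B_def by measurable
    define s where "s = (\<lambda>y. \<Sum>j\<in>{1..k}. (1/k) * indicator (B j) y :: real)"
    have s_eq: "s y = (\<Sum>j\<in>{1..k}. (1/k) * (if real j / k \<le> g y then 1 else 0))" if "y \<in> space M" for y
      using that by (simp add: s_def B_def indicator_def of_bool_def)
    have gb: "0 \<le> g y \<and> g y \<le> 1" if "y \<in> space M" for y using g that unfolding bnd_def by blast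
    have sl: "g y - 1/k \<le> s y \<and> s y \<le> g y" if y: "y \<in> space M" for y
    proof -
      have "g y - 1 / k \<le> (\<Sum>j\<in>{1..k}. (1 / k) * (if real j / k \<le> g y then 1 else 0))
         \<and> (\<Sum>j\<in>{1..k}. (1 / k) * (if real j / k \<le> g y then 1 else 0)) \<le> g y"
        using gb[OF y] by (intro layer[OF k]) auto
      then show ?thesis unfolding s_eq[OF y] .
    qed
    have s0: "0 \<le> s y" for y unfolding s_def by (intro sum_nonneg) auto
    have sm: "s \<in> borel_measurable M" unfolding s_def
      by (intro borel_measurable_sum borel_measurable_times borel_measurable_const borel_measurable_indicator BS)
    have sb: "bnd s 0 1" unfolding bnd_def
    proof (intro conjI ballI sm)
      fix y assume y: "y \<in> space M"
      show "0 \<le> s y" by (rule s0)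
      show "s y \<le> 1" using sl[OF y] gb[OF y] by linarith
    qed
    have ib: "\<And>j. j \<in> {1..k} \<Longrightarrow> bnd (indicator (B j)) 0 1" using ind_bnd BS by blast
    have Lsum: "L s = (\<Sum>j\<in>{1..k}. (1/k) * L (indicator (B j)))"
      using L_lin[of "{1..k}" "\<lambda>j. indicator (B j)" "\<lambda>_. 1/k"] ib sb unfolding s_def by simp
    have Isum: "(\<integral>y. s y \<partial>lam) = (\<Sum>j\<in>{1..k}. (1/k) * measure lam (B j))"
    proof -
      have "integrable lam (indicator (B j) :: 'a \<Rightarrow> real)" for j
      proof -
        have "emeasure lam (B j) < top" by (rule P.emeasure_finite[THEN less_top[THEN iffD1]])
        then show ?thesis using BS[of j] by (intro integrable_real_indicator) simp_all
      qed
      then have "(\<integral>y. s y \<partial>lam) = (\<Sum>j\<in>{1..k}. (1/k) * (\<integral>y. indicator (B j) y \<partial>lam))"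
        unfolding s_def by (simp add: Bochner_Integration.integral_sum)
      also have "\<dots> = (\<Sum>j\<in>{1..k}. (1/k) * measure lam (B j))"
        using BS sets.sets_into_space by (simp add: Int_absorb2)
      finally show ?thesis .
    qed
    have IL: "(\<integral>y. s y \<partial>lam) = L s" unfolding Isum Lsum using BS by (simp add: lam_meas rho_def)
    have bl: "borel_measurable lam = borel_measurable M" by (rule measurable_cong_sets) simp_all
    have gml: "g \<in> borel_measurable lam" "s \<in> borel_measurable lam" using g sb unfolding bl by (simp_all add: bnd_def)
    have gi: "integrable lam g" "integrable lam s"
      using g sb gml by (auto simp: bnd_def intro!: P.integrable_const_bound[where B=1] AE_I2)
    have "(\<integral>y. g y \<partial>lam) - (\<integral>y. s y \<partial>lam) = (\<integral>y. g y - s y \<partial>lam)"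
      using gi by simp
    moreover have "0 \<le> (\<integral>y. g y - s y \<partial>lam) \<and> (\<integral>y. g y - s y \<partial>lam) \<le> 1/k"
    proof -
      have dl: "0 \<le> g y - s y \<and> g y - s y \<le> 1/k" if "y \<in> space lam" for y
        using sl[of y] that by simp
      have dm: "(\<lambda>y. g y - s y) \<in> borel_measurable lam" by (intro borel_measurable_diff gml)
      show ?thesis by (rule bnd_prob_int[OF lam_prob dm dl])
    qed
    ultimately have 1: "\<bar>(\<integral>y. g y \<partial>lam) - (\<integral>y. s y \<partial>lam)\<bar> \<le> 1/k" by simp
    have dk: "1 / real k \<le> 1" using k by simp
    have dmM: "(\<lambda>y. g y - s y) \<in> borel_measurable M" by (intro borel_measurable_diff gm sm)
    have db: "bnd (\<lambda>y. g y - s y) 0 (1/k)" unfolding bnd_def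
    proof (intro conjI ballI dmM)
      fix y assume y: "y \<in> space M"
      show "0 \<le> g y - s y" using sl[OF y] by linarith
      show "g y - s y \<le> 1/k" using sl[OF y] by linarith
    qed
    have db1: "bnd (\<lambda>y. g y - s y) 0 1" unfolding bnd_def
    proof (intro conjI ballI dmM)
      fix y assume y: "y \<in> space M"
      show "0 \<le> g y - s y" using sl[OF y] by linarith
      show "g y - s y \<le> 1" using sl[OF y] dk by linarith
    qed
    have "L g = L (\<lambda>y. s y + (g y - s y))" by simp
    also have "\<dots> = L s + L (\<lambda>y. g y - s y)" by (rule L_add[OF sb db1]) (use g in simp)
    finally have 2: "\<bar>L g - L s\<bar> \<le> 1/k" using L_bnd[OF db1 db] by simp
    show ?thesis using 1 2 IL by simp
  qed
  note bnd2 = this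
  have "(\<integral>y. g y \<partial>lam) - L g = 0"
  proof (rule zero_by_inv)
    fix k :: nat assume "1 \<le> real k"
    then have "1 \<le> k" by simp
    then show "\<bar>(\<integral>y. g y \<partial>lam) - L g\<bar> \<le> 2 / real k" by (rule bnd2)
  qed
  then show ?thesis by linarith
qed

lemma lam_inv: "invariant_prob M K lam"
  unfolding invariant_prob_def
proof (intro conjI ballI)
  show "prob_space lam" by (rule lam_prob)
  show "sets lam = sets M" by simp
  fix A assume A: "A \<in> sets M"
  have e1: "(\<integral>x. kop K (indicator A) x \<partial>lam) = L (kop K (indicator A))"
    by (rule int_L[OF kop_bnd[OF ind_bnd[OF A]]])
  have e2: "L (kop K (indicator A)) = L (indicator A)" by (rule L_kop[OF ind_bnd[OF A]])
  have e3: "measure lam A = L (indicator A)" using lam_meas[OF A] unfolding rho_def .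
  show "(\<integral>x. kop K (indicator A) x \<partial>lam) = measure lam A" using e1 e2 e3 by linarith
qed

lemma uniq:
  assumes mu: "invariant_prob M K \<mu>" and nu: "invariant_prob M K \<nu>"
  shows "\<mu> = \<nu>"
proof -
  have Sm: "sets \<mu> = sets M" and Pm: "prob_space \<mu>" using mu by (auto simp: invariant_prob_def)
  have Sn: "sets \<nu> = sets M" and Pn: "prob_space \<nu>" using nu by (auto simp: invariant_prob_def)
  have key: "\<And>\<mu> a n A. invariant_prob M K \<mu> \<Longrightarrow> A \<in> sets M \<Longrightarrow> bnd (kpow K n (indicator A)) a (a + c ^ n)
      \<Longrightarrow> a \<le> measure \<mu> A \<and> measure \<mu> A \<le> a + c ^ n"
  proof -
    fix \<mu> a n A assume mu: "invariant_prob M K \<mu>" and A: "A \<in> sets M" and b: "bnd (kpow K n (indicator A)) a (a + c ^ n)"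
    have S: "sets \<mu> = sets M" and P: "prob_space \<mu>" using mu by (auto simp: invariant_prob_def)
    have sp: "space \<mu> = space M" using S by (rule sets_eq_imp_space_eq)
    have "(\<integral>x. kpow K n (indicator A) x \<partial>\<mu>) = (\<integral>x. indicator A x \<partial>\<mu>)"
      by (rule inv_kpow[OF mu ind_bnd[OF A]])
    also have "\<dots> = measure \<mu> (A \<inter> space \<mu>)" by (rule Bochner_Integration.integral_indicator)
    also have "A \<inter> space \<mu> = A" using sets.sets_into_space[OF A] sp by blast
    finally have e0: "(\<integral>x. kpow K n (indicator A) x \<partial>\<mu>) = measure \<mu> A" .
    note e = e0
    have bl: "borel_measurable \<mu> = borel_measurable M" by (rule measurable_cong_sets[OF S refl])
    have bm: "kpow K n (indicator A) \<in> borel_measurable \<mu>" using b unfolding bl bnd_def by blast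
    have bb: "\<And>x. x \<in> space \<mu> \<Longrightarrow> a \<le> kpow K n (indicator A) x \<and> kpow K n (indicator A) x \<le> a + c ^ n"
      using b unfolding sp bnd_def by blast
    have "a \<le> (\<integral>x. kpow K n (indicator A) x \<partial>\<mu>) \<and> (\<integral>x. kpow K n (indicator A) x \<partial>\<mu>) \<le> a + c ^ n"
      by (rule bnd_prob_int[OF P bm bb])
    then show "a \<le> measure \<mu> A \<and> measure \<mu> A \<le> a + c ^ n" using e by simp
  qed
  show ?thesis
  proof (rule measure_eqI)
    show "sets \<mu> = sets \<nu>" using Sm Sn by simp
    fix A assume "A \<in> sets \<mu>"
    then have A: "A \<in> sets M" using Sm by simp
    have "\<bar>measure \<mu> A - measure \<nu> A\<bar> \<le> 1 * c ^ n" for n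
    proof -
      obtain a where a: "bnd (kpow K n (indicator A)) a (a + c ^ n)" using kpow_osc[OF ind_bnd[OF A]] by blast
      have k1: "a \<le> measure \<mu> A" "measure \<mu> A \<le> a + c ^ n" using key[OF mu A a] by auto
      have k2: "a \<le> measure \<nu> A" "measure \<nu> A \<le> a + c ^ n" using key[OF nu A a] by auto
      have "measure \<mu> A - measure \<nu> A \<le> c ^ n" "measure \<nu> A - measure \<mu> A \<le> c ^ n"
        using k1 k2 by linarith+
      then show ?thesis by (simp add: abs_le_iff)
    qed
    then have "\<bar>measure \<mu> A - measure \<nu> A\<bar> \<le> 0" using zero_by_pow[OF c] by blast
    then have "measure \<mu> A = measure \<nu> A" by simp
    moreover have "emeasure \<mu> A = ennreal (measure \<mu> A)"
      by (rule finite_measure.emeasure_eq_measure[OF prob_space.finite_measure[OF Pm]])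
    moreover have "emeasure \<nu> A = ennreal (measure \<nu> A)"
      by (rule finite_measure.emeasure_eq_measure[OF prob_space.finite_measure[OF Pn]])
    ultimately show "emeasure \<mu> A = emeasure \<nu> A" by simp
  qed
qed

lemma ex1: "\<exists>!\<mu>. invariant_prob M K \<mu>"
  using lam_inv uniq by blast

end


lemma half_sums: "(\<lambda>k. (1/2::real) ^ (k + 1)) sums 1"
  using power_half_series by simp

context mk begin

lemma kpow_add2:
  assumes f: "bnd f a b" and g: "bnd g a' b'" and x: "x \<in> space M"
  shows "kpow K n (\<lambda>y. f y + g y) x = kpow K n f x + kpow K n g x"
  using kpow_sum[of "{0::nat,1}" "\<lambda>j. if j = 0 then f else g" "\<lambda>j. if j = 0 then a else a'"
      "\<lambda>j. if j = 0 then b else b'" x n "\<lambda>_. 1"] f g x by simp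

lemma ind_lim:
  assumes T: "\<And>N. T N \<in> sets M" and dec: "decseq T" and emp: "(\<Inter>N. T N) = {}" and x: "x \<in> space M"
  shows "(\<lambda>N. kpow K n (indicator (T N)) x) \<longlonglongrightarrow> 0"
proof -
  have "(\<lambda>N. kpow K n (indicator (T N)) x) \<longlonglongrightarrow> kpow K n (\<lambda>_. 0) x"
  proof (rule kpow_lim[where B=1])
    show "bnd (indicator (T N)) (- 1) 1" for N using T by (auto simp: bnd_def split: split_indicator)
    show "bnd (\<lambda>_. 0) (- 1) 1" by (auto simp: bnd_def)
    show "x \<in> space M" by (rule x)
    fix x assume "x \<in> space M"
    obtain N0 where N0: "x \<notin> T N0" using emp by auto
    have "eventually (\<lambda>N. indicator (T N) x = (0::real)) sequentially"
      unfolding eventually_sequentially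
    proof (intro exI allI impI)
      fix N assume "N0 \<le> N"
      then have "T N \<subseteq> T N0" using dec by (simp add: decseq_def)
      then have "x \<notin> T N" using N0 by blast
      then show "indicator (T N) x = (0::real)" by simp
    qed
    then show "(\<lambda>N. indicator (T N) x :: real) \<longlonglongrightarrow> 0" by (rule tendsto_eventually)
  qed
  then show ?thesis using kpow_const[OF x] by simp
qed

lemma res_summable:
  assumes f: "bnd f 0 1" and x: "x \<in> space M"
  shows "summable (\<lambda>k. (1/2) ^ (k+1) * kpow K k f x)"
proof (rule summable_comparison_test'[where g="\<lambda>k. (1/2::real) ^ (k+1)"])
  show "summable (\<lambda>k. (1/2::real) ^ (k+1))" using half_sums by (rule sums_summable)
  fix k :: nat
  have "0 \<le> kpow K k f x" "kpow K k f x \<le> 1" using kpow_bnd[OF f, of k] x by (auto simp: bnd_def)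
  then show "norm ((1/2) ^ (k+1) * kpow K k f x) \<le> (1/2::real) ^ (k+1)"
    by (simp add: abs_mult mult_left_le)
qed

lemma res_bounds:
  assumes f: "bnd f 0 1" and x: "x \<in> space M"
  shows "0 \<le> resolvent K f x \<and> resolvent K f x \<le> 1 \<and> f x / 2 \<le> resolvent K f x"
proof -
  have kb: "0 \<le> kpow K k f x \<and> kpow K k f x \<le> 1" for k using kpow_bnd[OF f, of k] x by (auto simp: bnd_def)
  have s: "summable (\<lambda>k. (1/2) ^ (k+1) * kpow K k f x)" by (rule res_summable[OF f x])
  have "resolvent K f x \<le> (\<Sum>k. (1/2::real) ^ (k+1))"
    unfolding resolvent_def
    by (rule suminf_le[OF _ s]) (use kb half_sums in \<open>auto simp: sums_summable mult_left_le\<close>)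
  also have "\<dots> = 1" using half_sums by (rule sums_unique[symmetric])
  finally have 1: "resolvent K f x \<le> 1" .
  have 2: "0 \<le> resolvent K f x" unfolding resolvent_def by (rule suminf_nonneg[OF s]) (use kb in simp)
  have "(\<Sum>k\<in>{0}. (1/2) ^ (k+1) * kpow K k f x) \<le> resolvent K f x"
    unfolding resolvent_def by (rule sum_le_suminf[OF s]) (use kb in auto)
  then have 3: "f x / 2 \<le> resolvent K f x" by simp
  show ?thesis using 1 2 3 by simp
qed

lemma res_meas:
  assumes f: "bnd f 0 1"
  shows "resolvent K f \<in> borel_measurable M"
proof (rule borel_measurable_LIMSEQ_real[where u="\<lambda>n x. \<Sum>k<n. (1/2) ^ (k+1) * kpow K k f x"])
  fix x assume "x \<in> space M"
  then show "(\<lambda>n. \<Sum>k<n. (1/2) ^ (k+1) * kpow K k f x) \<longlonglongrightarrow> resolvent K f x"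
    unfolding resolvent_def by (intro summable_LIMSEQ res_summable[OF f])
next
  fix n
  have [measurable]: "kpow K k f \<in> borel_measurable M" for k using kpow_bnd[OF f] by (simp add: bnd_def)
  show "(\<lambda>x. \<Sum>k<n. (1/2) ^ (k+1) * kpow K k f x) \<in> borel_measurable M" by measurable
qed

lemma res_bnd: "bnd f 0 1 \<Longrightarrow> bnd (resolvent K f) 0 1"
  using res_meas res_bounds by (auto simp: bnd_def)

lemma res_add:
  assumes A: "A \<in> sets M" and B: "B \<in> sets M" and d: "A \<inter> B = {}" and x: "x \<in> space M"
  shows "resolvent K (indicator (A \<union> B)) x = resolvent K (indicator A) x + resolvent K (indicator B) x"
proof -
  have e: "indicator (A \<union> B) = (\<lambda>y. indicator A y + indicator B y :: real)"
    using d by (auto simp: indicator_def fun_eq_iff)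
  have k: "kpow K k (indicator (A \<union> B)) x = kpow K k (indicator A) x + kpow K k (indicator B) x" for k
    unfolding e by (rule kpow_add2[OF ind_bnd[OF A] ind_bnd[OF B] x])
  show ?thesis unfolding resolvent_def k
    using suminf_add[OF res_summable[OF ind_bnd[OF A] x] res_summable[OF ind_bnd[OF B] x]]
    by (simp add: algebra_simps)
qed

lemma res_one:
  assumes x: "x \<in> space M"
  shows "resolvent K (indicator (space M)) x = 1"
proof -
  have "kpow K k (indicator (space M)) x = kpow K k (\<lambda>_. 1) x" for k by (rule kpow_cong[OF _ x]) simp
  then have "kpow K k (indicator (space M)) x = 1" for k using kpow_const[OF x] by simp
  moreover have "(\<Sum>k. (1/2::real) ^ (k+1)) = 1" by (rule sums_unique[OF half_sums, symmetric])
  ultimately show ?thesis unfolding resolvent_def by simp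
qed

lemma res_cont:
  assumes T: "\<And>N. T N \<in> sets M" and dec: "decseq T" and emp: "(\<Inter>N. T N) = {}" and x: "x \<in> space M"
  shows "(\<lambda>N. resolvent K (indicator (T N)) x) \<longlonglongrightarrow> 0"
proof -
  have "((\<lambda>N. suminf (\<lambda>k. (1/2) ^ (k+1) * kpow K k (indicator (T N)) x)) \<longlongrightarrow> suminf (\<lambda>k. (1/2::real) ^ (k+1) * 0)) sequentially"
  proof (rule tannerys_theorem[where M="\<lambda>k. (1/2::real) ^ (k+1)", THEN conjunct2, THEN conjunct2])
    show "\<And>k. ((\<lambda>N. (1/2) ^ (k+1) * kpow K k (indicator (T N)) x) \<longlongrightarrow> (1/2::real) ^ (k+1) * 0) sequentially"
      by (intro tendsto_mult tendsto_const ind_lim[OF T dec emp x])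
    show "summable (\<lambda>k. (1/2::real) ^ (k+1))" using half_sums by (rule sums_summable)
    show "sequentially \<noteq> bot" by simp
    have "norm ((1/2) ^ (k+1) * kpow K k (indicator (T N)) x) \<le> (1/2::real) ^ (k+1)" for k N
    proof -
      have "0 \<le> kpow K k (indicator (T N)) x" "kpow K k (indicator (T N)) x \<le> 1"
        using kpow_bnd[OF ind_bnd[OF T[of N]], of k] x by (auto simp: bnd_def)
      then show ?thesis by (simp add: abs_mult mult_left_le)
    qed
    then show "eventually (\<lambda>(k, N). norm ((1/2) ^ (k+1) * kpow K k (indicator (T N)) x) \<le> (1/2::real) ^ (k+1)) (at_top \<times>\<^sub>F sequentially)"
      by (intro always_eventually) auto
  qed
  then show ?thesis unfolding resolvent_def by simp
qed

end



locale mkb = mk +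
  fixes m :: "'a measure" and \<phi> :: "real \<Rightarrow> real" and \<delta> :: real
  assumes m_fin: "finite_measure m" and m_sets: "sets m = sets M"
    and \<phi>_cont: "continuous_on {0..} \<phi>" and \<phi>_range: "\<phi> ` {0..} \<subseteq> {0..}" and \<phi>_0: "\<phi> 0 = 0"
    and \<delta>: "0 \<le> \<delta>" "\<delta> < 1"
    and bound: "\<And>f x. f \<in> borel_measurable M \<Longrightarrow> (\<forall>y\<in>space M. 0 \<le> f y \<and> f y \<le> 1)
                  \<Longrightarrow> x \<in> space M \<Longrightarrow> kop K f x \<le> \<phi> (\<integral>y. f y \<partial>m) + \<delta>"
begin

lemma m_space: "space m = space M" using m_sets by (rule sets_eq_imp_space_eq)

lemma phi_nn: "0 \<le> t \<Longrightarrow> 0 \<le> \<phi> t" using \<phi>_range by auto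

lemma m_int: "bnd f 0 1 \<Longrightarrow> integrable m f"
  using m_fin
  by (intro finite_measure.integrable_const_bound[where B=1])
     (auto simp: bnd_def m_space measurable_cong_sets[OF m_sets refl] intro!: AE_I2)

lemma bound_ind: "A \<in> sets M \<Longrightarrow> x \<in> space M \<Longrightarrow> kop K (indicator A) x \<le> \<phi> (measure m A) + \<delta>"
  using bound[of "indicator A" x] sets.sets_into_space[of A M] by (auto simp: m_space Int_absorb2)

definition rR :: "'a set \<Rightarrow> real" where "rR A = (\<integral>x. resolvent K (indicator A) x \<partial>m)"

lemma rR_int: "A \<in> sets M \<Longrightarrow> integrable m (resolvent K (indicator A))"
  by (intro m_int res_bnd ind_bnd)

lemma rR_lower: assumes A: "A \<in> sets M" shows "0 \<le> rR A \<and> measure m A / 2 \<le> rR A"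
proof -
  have b: "bnd (resolvent K (indicator A)) 0 1" by (intro res_bnd ind_bnd A)
  have "0 \<le> rR A" unfolding rR_def
    by (rule integral_nonneg_AE) (use b in \<open>auto simp: bnd_def m_space intro!: AE_I2\<close>)
  moreover have "(\<integral>x. indicator A x / 2 \<partial>m) \<le> rR A" unfolding rR_def
  proof (rule integral_mono)
    have "emeasure m A < top" by (rule finite_measure.emeasure_finite[OF m_fin, THEN less_top[THEN iffD1]])
    then show "integrable m (\<lambda>x. indicator A x / 2 :: real)" using A m_sets
      by (intro integrable_divide_zero integrable_real_indicator) simp_all
    show "integrable m (resolvent K (indicator A))" by (rule rR_int[OF A])
    fix x assume "x \<in> space m"
    then show "indicator A x / 2 \<le> resolvent K (indicator A) x"
      using res_bounds[OF ind_bnd[OF A], of x] by (simp add: m_space)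
  qed
  moreover have "(\<integral>x. indicator A x / 2 \<partial>m) = measure m A / 2"
    using A sets.sets_into_space[of A M] by (simp add: m_space Int_absorb2)
  ultimately show ?thesis by simp
qed

lemma rR_add:
  assumes A: "A \<in> sets M" and B: "B \<in> sets M" and d: "A \<inter> B = {}"
  shows "rR (A \<union> B) = rR A + rR B"
proof -
  have "rR (A \<union> B) = (\<integral>x. resolvent K (indicator A) x + resolvent K (indicator B) x \<partial>m)"
    unfolding rR_def by (rule Bochner_Integration.integral_cong) (use res_add[OF A B d] in \<open>auto simp: m_space\<close>)
  also have "\<dots> = rR A + rR B" unfolding rR_def by (rule Bochner_Integration.integral_add[OF rR_int[OF A] rR_int[OF B]])
  finally show ?thesis .
qed

lemma rR_cont:
  assumes T: "\<And>N. T N \<in> sets M" and dec: "decseq T" and emp: "(\<Inter>N. T N) = {}"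
  shows "(\<lambda>N. rR (T N)) \<longlonglongrightarrow> 0"
proof -
  have "(\<lambda>N. rR (T N)) \<longlonglongrightarrow> (\<integral>x. 0 \<partial>m)" unfolding rR_def
  proof (rule integral_dominated_convergence[where w="\<lambda>_. 1"])
    show "(\<lambda>x. 0::real) \<in> borel_measurable m" by simp
    show "resolvent K (indicator (T N)) \<in> borel_measurable m" for N
      using res_meas[OF ind_bnd[OF T]] measurable_cong_sets[OF m_sets refl] by blast
    show "integrable m (\<lambda>_. 1::real)" using m_fin by (simp add: finite_measure.integrable_const)
    show "AE x in m. (\<lambda>N. resolvent K (indicator (T N)) x) \<longlonglongrightarrow> 0"
      by (rule AE_I2) (use res_cont[OF T dec emp] in \<open>simp add: m_space\<close>)
    show "AE x in m. norm (resolvent K (indicator (T N)) x) \<le> 1" for N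
      by (rule AE_I2) (use res_bounds[OF ind_bnd[OF T]] in \<open>auto simp: m_space\<close>)
  qed
  then show ?thesis by simp
qed

lemma rR_space: "rR (space M) = measure m (space M)"
proof -
  have "rR (space M) = (\<integral>x. 1 \<partial>m)" unfolding rR_def
    by (rule Bochner_Integration.integral_cong) (auto simp: m_space res_one)
  then show ?thesis by (simp add: m_space)
qed

definition mu :: "'a measure" where "mu = comp_resolvent M m K"

lemma mu_sets[simp]: "sets mu = sets M" and mu_space[simp]: "space mu = space M"
  by (simp_all add: mu_def comp_resolvent_def)

lemma mu_em: assumes A: "A \<in> sets M" shows "emeasure mu A = ennreal (rR A)"
  unfolding mu_def comp_resolvent_def rR_def[symmetric]
proof (rule emeasure_measure_of_sigma[OF sets.sigma_algebra_axioms _ _ A])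
  have "rR {} = 0" using rR_add[of "{}" "{}"] by simp
  then show "positive (sets M) (\<lambda>A. ennreal (rR A))" by (simp add: positive_def)
  show "countably_additive (sets M) (\<lambda>A. ennreal (rR A))"
  proof (rule ca_lemma)
    show "\<And>A. A \<in> sets M \<Longrightarrow> 0 \<le> rR A" using rR_lower by blast
    show "\<And>A B. A \<in> sets M \<Longrightarrow> B \<in> sets M \<Longrightarrow> A \<inter> B = {} \<Longrightarrow> rR (A \<union> B) = rR A + rR B"
      by (rule rR_add)
    show "\<And>T. (\<And>N. T N \<in> sets M) \<Longrightarrow> decseq T \<Longrightarrow> (\<Inter>N. T N) = {} \<Longrightarrow> (\<lambda>N. rR (T N)) \<longlonglongrightarrow> 0"
      by (rule rR_cont)
  qed
qed

lemma mu_meas: "A \<in> sets M \<Longrightarrow> measure mu A = rR A"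
  using mu_em rR_lower by (simp add: measure_def)

lemma mu_fin: "finite_measure mu"
  by (rule finite_measureI) (simp add: mu_em[OF sets.top])

lemma mean_inv: "mean_almost_invariant M K mu"
  unfolding mean_almost_invariant_def
proof (intro conjI mu_fin mu_sets)
  interpret MU: finite_measure mu by (rule mu_fin)
  define E where "E = measure mu (space M)"
  have E0: "0 \<le> E" unfolding E_def by simp
  define \<psi> where "\<psi> A = measure mu A + \<phi> (measure m A) * E" for A
  show "\<exists>\<delta>' \<psi> n1. 0 \<le> \<delta>' \<and> \<delta>' < 1 \<and> (\<forall>A\<in>sets M. 0 \<le> \<psi> A) \<and>
        (\<forall>\<epsilon>>0. \<exists>\<eta>>0. \<forall>A\<in>sets M. measure mu A < \<eta> \<longrightarrow> \<psi> A < \<epsilon>) \<and>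
        (\<forall>A\<in>sets M. \<forall>n\<ge>n1. (\<integral>x. cesaro K n (indicator A) x \<partial>mu) \<le> \<psi> A + \<delta>' * measure mu (space M))"
  proof (rule exI[of _ \<delta>], rule exI[of _ \<psi>], rule exI[of _ "1::nat"], intro conjI ballI allI impI)
    show "0 \<le> \<delta>" "\<delta> < 1" using \<delta> by auto
    fix A assume A: "A \<in> sets M"
    show "0 \<le> \<psi> A" unfolding \<psi>_def using E0 phi_nn[of "measure m A"] by simp
  next
    fix \<epsilon> :: real assume \<epsilon>: "0 < \<epsilon>"
    define e' where "e' = \<epsilon> / (2 * (E + 1))"
    have e': "0 < e'" unfolding e'_def using \<epsilon> E0 by simp
    obtain d where d: "d > 0" "\<And>x'. x' \<in> {0..} \<Longrightarrow> dist x' 0 < d \<Longrightarrow> dist (\<phi> x') (\<phi> 0) < e'"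
      using \<phi>_cont e' unfolding continuous_on_iff by (metis atLeast_iff order_refl)
    have eE: "e' * E \<le> \<epsilon> / 2"
    proof -
      have "e' * E \<le> e' * (E + 1)" using e' by simp
      also have "\<dots> = \<epsilon> / 2" unfolding e'_def using E0 by (simp add: field_simps)
      finally show ?thesis .
    qed
    show "\<exists>\<eta>>0. \<forall>A\<in>sets M. measure mu A < \<eta> \<longrightarrow> \<psi> A < \<epsilon>"
    proof (intro exI[of _ "min (\<epsilon>/2) (d/2)"] conjI ballI impI)
      show "0 < min (\<epsilon>/2) (d/2)" using \<epsilon> d by simp
      fix A assume A: "A \<in> sets M" and small: "measure mu A < min (\<epsilon>/2) (d/2)"
      have "measure m A \<le> 2 * measure mu A" using rR_lower[OF A] mu_meas[OF A] by simp
      then have "measure m A < d" using small by simp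
      then have "dist (\<phi> (measure m A)) (\<phi> 0) < e'" using d(2)[of "measure m A"] by simp
      then have p: "\<phi> (measure m A) < e'" using phi_nn[of "measure m A"] \<phi>_0 by (simp add: dist_real_def)
      have "\<phi> (measure m A) * E \<le> e' * E" using p E0 by (simp add: mult_right_mono)
      then show "\<psi> A < \<epsilon>" unfolding \<psi>_def using small eE by simp
    qed
  next
    fix A and n :: nat assume A: "A \<in> sets M" and n: "1 \<le> n"
    have Afin: "emeasure mu A < top" by (rule MU.emeasure_finite[THEN less_top[THEN iffD1]])
    define C where "C = \<phi> (measure m A) + \<delta>"
    have C0: "0 \<le> C" unfolding C_def using phi_nn[of "measure m A"] \<delta> by simp
    have kb: "bnd (kop K (indicator A)) 0 C"
      using kop_bnd[OF ind_bnd[OF A]] bound_ind[OF A] by (auto simp: bnd_def C_def)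
    have kp: "kpow K k (indicator A) x \<le> (if k = 0 then indicator A x else 0) + C" if x: "x \<in> space M" for k x
    proof (cases k)
      case 0 then show ?thesis using C0 by simp
    next
      case (Suc j)
      then show ?thesis using kpow_bnd[OF kb, of j] x by (simp add: kpow_Suc' bnd_def)
    qed
    have kn: "0 \<le> kpow K k (indicator A) x" if "x \<in> space M" for k x
      using kpow_bnd[OF ind_bnd[OF A], of k] that by (simp add: bnd_def)
    have pw: "cesaro K n (indicator A) x \<le> indicator A x + C" if x: "x \<in> space M" for x
    proof -
      have "(\<Sum>k<n. kpow K k (indicator A) x) \<le> (\<Sum>k<n. (if k = 0 then indicator A x else 0) + C)"
        by (rule sum_mono) (rule kp[OF x])
      also have "\<dots> = indicator A x + real n * C" using n by (simp add: sum.distrib)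
      finally have s: "(\<Sum>k<n. kpow K k (indicator A) x) \<le> indicator A x + real n * C" .
      have np: "real n > 0" using n by simp
      have "cesaro K n (indicator A) x \<le> (1 / real n) * (indicator A x + real n * C)"
        unfolding cesaro_def by (rule mult_left_mono[OF s]) simp
      also have "\<dots> = indicator A x / real n + C" using np by (simp add: field_simps)
      also have "\<dots> \<le> indicator A x + C"
      proof -
        have "indicator A x / real n \<le> indicator A x" using n
          by (simp add: indicator_def divide_le_eq_1)
        then show ?thesis by simp
      qed
      finally show ?thesis .
    qed
    have cn: "0 \<le> cesaro K n (indicator A) x" if "x \<in> space M" for x
      unfolding cesaro_def using kn[OF that] by (simp add: sum_nonneg)
    have [measurable]: "kpow K k (indicator A) \<in> borel_measurable M" for k
      using kpow_bnd[OF ind_bnd[OF A]] by (simp add: bnd_def)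
    have cm: "cesaro K n (indicator A) \<in> borel_measurable M"
      unfolding cesaro_def[abs_def] by measurable
    have "(\<integral>x. cesaro K n (indicator A) x \<partial>mu) \<le> (\<integral>x. indicator A x + C \<partial>mu)"
    proof (rule integral_mono)
      show "integrable mu (cesaro K n (indicator A))"
      proof (rule MU.integrable_const_bound[where B="1 + C"])
        show "AE x in mu. norm (cesaro K n (indicator A) x) \<le> 1 + C"
        proof (rule AE_I2)
          fix x assume "x \<in> space mu"
          then have x: "x \<in> space M" by simp
          have i1: "indicator A x \<le> (1::real)" by (simp add: indicator_def)
          have "norm (cesaro K n (indicator A) x) = cesaro K n (indicator A) x" using cn[OF x] by simp
          moreover have "cesaro K n (indicator A) x \<le> 1 + C" using pw[OF x] i1 by linarith
          ultimately show "norm (cesaro K n (indicator A) x) \<le> 1 + C" by simp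
        qed
        show "cesaro K n (indicator A) \<in> borel_measurable mu"
          using cm measurable_cong_sets[OF mu_sets refl] by blast
      qed
      show "integrable mu (\<lambda>x. indicator A x + C)" using A
        by (intro Bochner_Integration.integrable_add) (auto simp: Afin)
      show "\<And>x. x \<in> space mu \<Longrightarrow> cesaro K n (indicator A) x \<le> indicator A x + C" using pw by simp
    qed
    also have "(\<integral>x. indicator A x + C \<partial>mu) = measure mu A + C * E"
      using A sets.sets_into_space[of A M]
      by (subst Bochner_Integration.integral_add) (auto simp: Afin Int_absorb2 E_def)
    also have "\<dots> = \<psi> A + \<delta> * measure mu (space M)" unfolding \<psi>_def C_def E_def by (simp add: algebra_simps)
    finally show "(\<integral>x. cesaro K n (indicator A) x \<partial>mu) \<le> \<psi> A + \<delta> * measure mu (space M)" .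
  qed
qed

lemma count_bound:
  assumes G: "finite G" and inv: "\<And>\<mu>. \<mu> \<in> G \<Longrightarrow> invariant_prob M K \<mu>"
    and sing: "\<And>\<mu> \<nu>. \<mu> \<in> G \<Longrightarrow> \<nu> \<in> G \<Longrightarrow> \<mu> \<noteq> \<nu> \<Longrightarrow> mutually_singular M \<mu> \<nu>"
    and tprop: "\<And>s. 0 \<le> s \<Longrightarrow> 1 - \<delta> \<le> \<phi> s \<Longrightarrow> t \<le> s"
  shows "real (card G) * t \<le> measure m (space M)"
proof -
  interpret mf: finite_measure m by (rule m_fin)
  define N where "N \<mu> \<nu> = (SOME A. A \<in> sets M \<and> emeasure \<mu> A = 0 \<and> emeasure \<nu> (space M - A) = 0)"
    for \<mu> \<nu> :: "'a measure"
  have N: "N \<mu> \<nu> \<in> sets M \<and> emeasure \<mu> (N \<mu> \<nu>) = 0 \<and> emeasure \<nu> (space M - N \<mu> \<nu>) = 0"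
    if "\<mu> \<in> G" "\<nu> \<in> G" "\<mu> \<noteq> \<nu>" for \<mu> \<nu>
  proof -
    have "\<exists>A. A \<in> sets M \<and> emeasure \<mu> A = 0 \<and> emeasure \<nu> (space M - A) = 0"
      using sing[OF that] unfolding mutually_singular_def by blast
    then show ?thesis unfolding N_def by (rule someI_ex)
  qed
  define Full where "Full \<mu> = {x\<in>space M. \<forall>\<nu>\<in>G-{\<mu>}. x \<in> N \<nu> \<mu>}" for \<mu>
  define D where "D \<mu> = Full \<mu> - (\<Union>\<nu>\<in>G-{\<mu>}. Full \<nu>)" for \<mu>
  have FullS: "Full \<mu> \<in> sets M" if "\<mu> \<in> G" for \<mu>
    unfolding Full_def
  proof (rule sets.sets_Collect_finite_All)
    show "finite (G - {\<mu>})" using G by simp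
    fix \<nu> assume "\<nu> \<in> G - {\<mu>}"
    then have "N \<nu> \<mu> \<in> sets M" using N[of \<nu> \<mu>] that by auto
    moreover have "{x\<in>space M. x \<in> N \<nu> \<mu>} = N \<nu> \<mu>" using calculation sets.sets_into_space by auto
    ultimately show "{x\<in>space M. x \<in> N \<nu> \<mu>} \<in> sets M" by simp
  qed
  have DS: "D \<mu> \<in> sets M" if "\<mu> \<in> G" for \<mu>
    unfolding D_def using FullS that G by (intro sets.Diff sets.finite_UN) auto
  have disj: "disjoint_family_on D G"
    unfolding disjoint_family_on_def D_def by auto
  have tD: "t \<le> measure m (D \<mu>)" if mu: "\<mu> \<in> G" for \<mu>
  proof -
    have I: "invariant_prob M K \<mu>" by (rule inv[OF mu])
    then have S: "sets \<mu> = sets M" and P: "prob_space \<mu>"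
      and I': "\<And>A. A \<in> sets M \<Longrightarrow> (\<integral>x. kop K (indicator A) x \<partial>\<mu>) = measure \<mu> A"
      by (auto simp: invariant_prob_def)
    interpret P: prob_space \<mu> by (rule P)
    have sp: "space \<mu> = space M" using S by (rule sets_eq_imp_space_eq)
    have ae1: "AE x in \<mu>. x \<in> N \<nu> \<mu>" if "\<nu> \<in> G - {\<mu>}" for \<nu>
    proof -
      have n: "N \<nu> \<mu> \<in> sets M" "emeasure \<mu> (space M - N \<nu> \<mu>) = 0" using N[of \<nu> \<mu>] that mu by auto
      have "space M - N \<nu> \<mu> \<in> null_sets \<mu>" using n S by (auto intro!: null_setsI)
      from AE_not_in[OF this] show ?thesis
      proof (rule AE_mp[OF _ AE_I2], intro impI)
        fix x assume "x \<in> space \<mu>" "x \<notin> space M - N \<nu> \<mu>"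
        then show "x \<in> N \<nu> \<mu>" using sp by blast
      qed
    qed
    have ae2: "AE x in \<mu>. x \<notin> N \<mu> \<nu>" if "\<nu> \<in> G - {\<mu>}" for \<nu>
    proof -
      have n: "N \<mu> \<nu> \<in> sets M" "emeasure \<mu> (N \<mu> \<nu>) = 0" using N[of \<mu> \<nu>] that mu by auto
      have "N \<mu> \<nu> \<in> null_sets \<mu>" using n S by (auto intro!: null_setsI)
      then show ?thesis by (rule AE_not_in)
    qed
    have finG: "finite (G - {\<mu>})" using G by simp
    have A1: "AE x in \<mu>. \<forall>\<nu>\<in>G-{\<mu>}. x \<in> N \<nu> \<mu>" by (rule AE_finite_allI[OF finG ae1])
    have A2: "AE x in \<mu>. \<forall>\<nu>\<in>G-{\<mu>}. x \<notin> N \<mu> \<nu>" by (rule AE_finite_allI[OF finG ae2])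
    have "AE x in \<mu>. x \<in> D \<mu>"
      using AE_space A1 A2
    proof eventually_elim
      case (elim x)
      then have x: "x \<in> space \<mu>" and h1: "\<forall>\<nu>\<in>G-{\<mu>}. x \<in> N \<nu> \<mu>"
        and h2: "\<forall>\<nu>\<in>G-{\<mu>}. x \<notin> N \<mu> \<nu>" by auto
      have xF: "x \<in> Full \<mu>" unfolding Full_def using x h1 sp by simp
      have "x \<notin> Full \<nu>" if "\<nu> \<in> G - {\<mu>}" for \<nu>
      proof
        assume "x \<in> Full \<nu>"
        then have "x \<in> N \<mu> \<nu>" unfolding Full_def using that mu by blast
        then show False using h2 that by blast
      qed
      then show "x \<in> D \<mu>" unfolding D_def using xF by blast
    qed
    then have m1: "measure \<mu> (D \<mu>) = 1" using P.prob_eq_1[of "D \<mu>"] DS[OF mu] S by simp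
    have bl: "borel_measurable \<mu> = borel_measurable M" by (rule measurable_cong_sets[OF S refl])
    have km: "kop K (indicator (D \<mu>)) \<in> borel_measurable \<mu>"
      unfolding bl by (rule kop_meas) (use DS[OF mu] in simp)
    have kb: "0 \<le> kop K (indicator (D \<mu>)) x \<and> kop K (indicator (D \<mu>)) x \<le> \<phi> (measure m (D \<mu>)) + \<delta>"
      if "x \<in> space \<mu>" for x
      using kop_bnd[OF ind_bnd[OF DS[OF mu]]] bound_ind[OF DS[OF mu]] sp that by (auto simp: bnd_def)
    have "(\<integral>x. kop K (indicator (D \<mu>)) x \<partial>\<mu>) \<le> \<phi> (measure m (D \<mu>)) + \<delta>"
      using bnd_prob_int[OF P km kb] by blast
    then have "1 - \<delta> \<le> \<phi> (measure m (D \<mu>))" using I'[OF DS[OF mu]] m1 by simp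
    then show ?thesis using tprop by simp
  qed
  have "real (card G) * t = (\<Sum>\<mu>\<in>G. t)" by simp
  also have "\<dots> \<le> (\<Sum>\<mu>\<in>G. measure m (D \<mu>))" by (rule sum_mono) (rule tD)
  also have "\<dots> = measure m (\<Union>\<mu>\<in>G. D \<mu>)"
    by (rule mf.finite_measure_finite_Union[symmetric]) (use G DS disj m_sets in auto)
  also have "\<dots> \<le> measure m (space M)"
    by (rule mf.finite_measure_mono) (use DS sets.sets_into_space m_sets in auto)
  finally show ?thesis .
qed

end


theorem corollary3p12:
  fixes S :: "'a::polish_space set"
    and K :: "'a \<Rightarrow> 'a measure"
    and m :: "'a measure"
    and \<phi> :: "real \<Rightarrow> real"
    and \<delta> :: real
  defines "M \<equiv> restrict_space borel S"
  assumes S_ne: "S \<noteq> {}"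
    and S_um: "universally_measurable S"
    and K: "markov_kernel M K"
    and m_fin: "finite_measure m" and m_sets: "sets m = sets M"
    and \<phi>_cont: "continuous_on {0..} \<phi>"
    and \<phi>_range: "\<phi> ` {0..} \<subseteq> {0..}"
    and \<phi>_0: "\<phi> 0 = 0"
    and \<phi>_inj: "inj_on \<phi> {0..}"
    and \<phi>_inv_mono: "mono_on (\<phi> ` {0..}) (the_inv_into {0..} \<phi>)"
    and \<delta>: "0 \<le> \<delta>" "\<delta> < 1"
    and bound: "\<And>f x. f \<in> borel_measurable M \<Longrightarrow> (\<forall>y\<in>space M. 0 \<le> f y \<and> f y \<le> 1)
                  \<Longrightarrow> x \<in> space M \<Longrightarrow> kop K f x \<le> \<phi> (\<integral>y. f y \<partial>m) + \<delta>"
  shows "mean_almost_invariant M K (comp_resolvent M m K)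
       \<and> (\<forall>F. (\<forall>\<mu>\<in>F. invariant_prob M K \<mu>)
              \<and> (\<forall>\<mu>\<in>F. \<forall>\<nu>\<in>F. \<mu> \<noteq> \<nu> \<longrightarrow> mutually_singular M \<mu> \<nu>)
              \<longrightarrow> finite F \<and>
                  real (card F) \<le> measure m (space M) / the_inv_into {0..} \<phi> (1 - \<delta>))
       \<and> (\<phi> (measure m (space M) / 2) < 1 - \<delta> \<longrightarrow> (\<exists>!\<mu>. invariant_prob M K \<mu>))"
proof -
  have mk: "mk M K" using K by (simp add: mk_def markov_kernel_def)
  interpret mk M K by (rule mk)
  have spM: "space M = S" unfolding M_def by (simp add: space_restrict_space)
  have ne: "space M \<noteq> {}" using S_ne spM by simp
  have mkb: "mkb M K m \<phi> \<delta>"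
    unfolding mkb_def mkb_axioms_def using mk m_fin m_sets \<phi>_cont \<phi>_range \<phi>_0 \<delta> bound by blast
  interpret B: mkb M K m \<phi> \<delta> by (rule mkb)
  have phi_less: "\<phi> a < \<phi> b" if ab: "0 \<le> a" "a < b" for a b
  proof (rule ccontr)
    assume "\<not> \<phi> a < \<phi> b"
    then have "\<phi> b \<le> \<phi> a" by simp
    then have "the_inv_into {0..} \<phi> (\<phi> b) \<le> the_inv_into {0..} \<phi> (\<phi> a)"
      by (rule mono_onD[OF \<phi>_inv_mono, rotated 2]) (use ab in auto)
    then have "b \<le> a" using the_inv_into_f_f[OF \<phi>_inj] ab by simp
    then show False using ab by simp
  qed
  have phi_mono: "\<phi> a \<le> \<phi> b" if "0 \<le> a" "a \<le> b" for a b
    using phi_less[of a b] that by (cases "a = b") auto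
  define mE where "mE = measure m (space M)"
  have mE0: "0 \<le> mE" unfolding mE_def by simp
  obtain x0 where x0: "x0 \<in> space M" using ne by blast
  have one: "1 - \<delta> \<le> \<phi> mE"
  proof -
    have "kop K (\<lambda>_. 1) x0 \<le> \<phi> (\<integral>y. 1 \<partial>m) + \<delta>" by (rule bound) (use x0 in auto)
    then show ?thesis using kop_const[OF x0] by (simp add: B.m_space mE_def)
  qed
  have cm: "continuous_on {0..mE} \<phi>" by (rule continuous_on_subset[OF \<phi>_cont]) auto
  have p0: "\<phi> 0 \<le> 1 - \<delta>" using \<phi>_0 \<delta> by simp
  obtain s0 where s0: "0 \<le> s0" "s0 \<le> mE" "\<phi> s0 = 1 - \<delta>"
    using IVT'[of \<phi> 0 "1 - \<delta>" mE, OF p0 one mE0 cm] by blast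
  define t where "t = the_inv_into {0..} \<phi> (1 - \<delta>)"
  have ts0: "t = s0" unfolding t_def using the_inv_into_f_f[OF \<phi>_inj, of s0] s0 by simp
  have tpos: "0 < t"
  proof -
    have "t \<noteq> 0" using ts0 s0 \<phi>_0 \<delta> by auto
    then show ?thesis using ts0 s0 by simp
  qed
  have tprop: "t \<le> s" if "0 \<le> s" "1 - \<delta> \<le> \<phi> s" for s
  proof (rule ccontr)
    assume "\<not> t \<le> s"
    then have "\<phi> s < \<phi> t" using phi_less[of s t] that by simp
    then show False using that ts0 s0 by simp
  qed
  have P1: "mean_almost_invariant M K (comp_resolvent M m K)"
    using B.mean_inv by (simp add: B.mu_def)
  have P2: "finite F \<and> real (card F) \<le> measure m (space M) / the_inv_into {0..} \<phi> (1 - \<delta>)"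
    if F: "(\<forall>\<mu>\<in>F. invariant_prob M K \<mu>) \<and> (\<forall>\<mu>\<in>F. \<forall>\<nu>\<in>F. \<mu> \<noteq> \<nu> \<longrightarrow> mutually_singular M \<mu> \<nu>)" for F
  proof -
    have cb: "real (card G) * t \<le> mE" if "G \<subseteq> F" "finite G" for G
      unfolding mE_def
    proof (rule B.count_bound)
      show "finite G" by (rule that(2))
      show "\<And>\<mu>. \<mu> \<in> G \<Longrightarrow> invariant_prob M K \<mu>" using F that(1) by blast
      show "\<And>\<mu> \<nu>. \<mu> \<in> G \<Longrightarrow> \<nu> \<in> G \<Longrightarrow> \<mu> \<noteq> \<nu> \<Longrightarrow> mutually_singular M \<mu> \<nu>"
        using F that(1) by blast
      show "\<And>s. 0 \<le> s \<Longrightarrow> 1 - \<delta> \<le> \<phi> s \<Longrightarrow> t \<le> s" by (rule tprop)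
    qed
    have fin: "finite F"
    proof (rule ccontr)
      assume inf: "infinite F"
      obtain n :: nat where n: "mE / t < real n" using reals_Archimedean2 by blast
      obtain G where G: "finite G" "card G = n" "G \<subseteq> F" using infinite_arbitrarily_large[OF inf] by blast
      have "real n * t \<le> mE" using cb[OF G(3,1)] G(2) by simp
      then have "real n \<le> mE / t" using tpos by (simp add: pos_le_divide_eq)
      then show False using n by simp
    qed
    have "real (card F) * t \<le> mE" using cb[OF order_refl fin] .
    then have "real (card F) \<le> mE / t" using tpos by (simp add: pos_le_divide_eq)
    then show ?thesis using fin unfolding mE_def t_def by simp
  qed
  have P3: "\<exists>!\<mu>. invariant_prob M K \<mu>" if hyp: "\<phi> (mE / 2) < 1 - \<delta>"
  proof -
    define c where "c = \<phi> (mE / 2) + \<delta>"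
    have c0: "0 \<le> c" unfolding c_def using B.phi_nn[of "mE/2"] mE0 \<delta> by simp
    have c1: "c < 1" unfolding c_def using hyp by simp
    interpret mf: finite_measure m by (rule m_fin)
    have contr: "kop K g x - kop K g y \<le> c" if g: "bnd g 0 1" and x: "x \<in> space M" and y: "y \<in> space M" for g x y
    proof -
      define I where "I = (\<integral>z. g z \<partial>m)"
      have gm: "g \<in> borel_measurable M" and gb: "\<And>z. z \<in> space M \<Longrightarrow> 0 \<le> g z \<and> g z \<le> 1"
        using g by (auto simp: bnd_def)
      have gi: "integrable m g" by (rule B.m_int[OF g])
      have I0: "0 \<le> I" unfolding I_def by (rule integral_nonneg_AE) (use gb in \<open>auto simp: B.m_space intro!: AE_I2\<close>)
      have kx: "0 \<le> kop K g x \<and> kop K g x \<le> 1" "0 \<le> kop K g y \<and> kop K g y \<le> 1"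
        using kop_bnd[OF g] x y by (auto simp: bnd_def)
      show ?thesis
      proof (cases "I \<le> mE / 2")
        case True
        have "kop K g x \<le> \<phi> I + \<delta>" unfolding I_def by (rule bound[OF gm]) (use gb x in auto)
        also have "\<phi> I \<le> \<phi> (mE / 2)" by (rule phi_mono[OF I0 True])
        finally show ?thesis using kx unfolding c_def by simp
      next
        case False
        define h where "h z = -1 * g z + 1" for z
        have hm: "h \<in> borel_measurable M" unfolding h_def using gm by simp
        have hb: "\<forall>z\<in>space M. 0 \<le> h z \<and> h z \<le> 1" unfolding h_def using gb by auto
        have hI: "(\<integral>z. h z \<partial>m) = mE - I"
          unfolding h_def I_def mE_def using gi by (simp add: B.m_space)
        have IE: "I \<le> mE"
        proof -
          have "I \<le> (\<integral>z. 1 \<partial>m)" unfolding I_def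
            by (rule integral_mono[OF gi]) (use gb in \<open>auto simp: B.m_space\<close>)
          then show ?thesis by (simp add: mE_def B.m_space)
        qed
        have "kop K h y \<le> \<phi> (\<integral>z. h z \<partial>m) + \<delta>" by (rule bound[OF hm hb y])
        also have "\<phi> (\<integral>z. h z \<partial>m) \<le> \<phi> (mE / 2)" unfolding hI
          by (rule phi_mono) (use False IE in \<open>auto\<close>)
        finally have "kop K h y \<le> c" unfolding c_def by simp
        moreover have "kop K h y = -1 * kop K g y + 1" unfolding h_def by (rule kop_aff[OF g y])
        ultimately show ?thesis using kx by simp
      qed
    qed
    have "mkc M K c" unfolding mkc_def mkc_axioms_def using mk c0 c1 ne contr by blast
    then interpret C: mkc M K c .
    show ?thesis by (rule C.ex1)
  qed
  show ?thesis using P1 P2 P3 unfolding mE_def by blast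
qed


end
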